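(* Under the standing setting and the standing parameter choice described in the context, let $\{\hat\omega^k\}=\{(x^k,\xi^k,\hat x^k,\xi^{k-1})\}$ be generated by iBPDCA and assume it is bounded. For each $k$ define $\upsilon^{k+1}=(\upsilon^{k+1}_x,\upsilon^{k+1}_\xi,\upsilon^{k+1}_{\hat x},\upsilon^{k+1}_\zeta)$ by $\upsilon^{k+1}_{x}=\nabla h^-(\hat{x}^k)-\nabla h^-(x^{k+1})+2\delta(x^{k+1}-\hat{x}^{k+1})-\tau(\nabla\psi(x^{k+1})-\nabla\psi(\hat{x}^k))$, $\upsilon^{k+1}_{\xi}=\hat{x}^k-x^k+\frac{1}{\alpha_{k+1}}(x^{k+1}-\hat{x}^{k+1})+(2\eta-\beta)(\xi^{k+1}-\xi^k)$, $\upsilon^{k+1}_{\hat{x}}=-2\delta(x^{k+1}-\hat{x}^{k+1})$, $\upsilon^{k+1}_{\zeta}=2\eta(\xi^{k}-\xi^{k+1})$. Then $\upsilon^{k+1}\in\partial\hat\Theta(\hat\omega^{k+1})$, and there exists $\theta>0$ such that for all $k$ $$\operatorname{dist}(0,\partial \hat{\Theta}(\hat{\omega}^{k+1}))\leq \theta\big(\|x^{k}-\hat{x}^{k}\|+\|x^{k+1}-\hat{x}^{k+1}\|+\|\xi^{k+1}-\xi^k\| \big).$$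
   Context: Problem: minimize $\Phi(x)=f(x)-g(x)+h(x)$ over $x\in\mathbb{R}^n$, where: $f:\mathbb{R}^n\to(-\infty,\infty]$ is proper, lower semicontinuous and convex; $g:\mathbb{R}^n\to\mathbb{R}$ is convex and continuous; $h=h^+-h^-$ where $h^+,h^-:\mathbb{R}^n\to\mathbb{R}$ are differentiable with Lipschitz continuous gradients of moduli $L_h^+$ and $L_h^-$ respectively (not necessarily convex); and $\inf_x\Phi(x)>-\infty$. $g^*$ is the convex conjugate of $g$. Kernel: $\psi:\mathbb{R}^n\to\mathbb{R}$ is differentiable, $\rho$-strongly convex ($\rho>0$), with $\nabla\psi$ Lipschitz continuous with modulus $L_\psi$; $\mathscr{B}_\psi(x,y)=\psi(x)-\psi(y)-\langle\nabla\psi(y),x-y\rangle$. Algorithm (iBPDCA): choose $x^0,\xi^0\in\mathbb{R}^n$, set $x^{-1}=x^0$, $\{\alpha_k\}\subseteq[\alpha_{\min},1]$ with $0<\alpha_{\min}<1$, $\beta>1/2$, $\tau>0$. For $k=0,1,\dots$: $\hat x^k=x^k+\alpha_k(x^k-x^{k-1})$; $\xi^{k+1}=\arg\min_{\xi}\{g^*(\xi)-\langle\hat x^k,\xi\rangle+\frac{\beta}{2}\|\xi-\xi^k\|^2\}$; $x^{k+1}\in\arg\min_{x}\{f(x)+h^+(x)-\langle x-\hat x^k,\ \xi^{k+1}+\nabla h^-(\hat x^k)\rangle+\tau\mathscr{B}_\psi(x,\hat x^k)\}$ (assumed to exist). $\Theta(x,\xi)=f(x)+g^*(\xi)-\langle\xi,x\rangle+h^+(x)-h^-(x)$;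 merit function $\hat\Theta(x,\xi,\hat x,\zeta)=\Theta(x,\xi)+\delta\|x-\hat x\|^2+\eta\|\xi-\zeta\|^2$ on $\mathbb{R}^n\times\mathbb{R}^n\times\mathbb{R}^n\times\mathbb{R}^n$; $\hat\omega^k=(x^k,\xi^k,\hat x^k,\xi^{k-1})$. $\partial$ denotes the limiting (Mordukhovich) subdifferential, and $\operatorname{dist}(0,S)=\inf_{s\in S}\|s\|$. Standing parameter choice: $\epsilon\in(0,1)$, $\beta>1/2$, and $\delta,\tau,\eta$ satisfy $\delta=\frac{\tau L_\psi-L_h^-}{2[(1-\epsilon)+(1+\epsilon)\alpha_{\min}^2]}$, $\tau=\frac{2(L_h^-)^2+L_h^-+1+2(1+\epsilon)\delta}{2\rho}$, $\eta=\frac{2\beta-1}{2(1+\epsilon)}$, with $L_h^-<\tau L_\psi$. *)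

theory Defs
  imports "HOL-Analysis.Analysis"
begin

definition proper_fun :: "('a \<Rightarrow> ereal) \<Rightarrow> bool" where
  "proper_fun F \<longleftrightarrow> (\<forall>x. F x \<noteq> -\<infinity>) \<and> (\<exists>x. F x < \<infinity>)"

definition lsc_fun :: "('a::topological_space \<Rightarrow> ereal) \<Rightarrow> bool" where
  "lsc_fun F \<longleftrightarrow> (\<forall>x. F x \<le> Liminf (at x) F)"

definition convex_efun :: "('a::real_vector \<Rightarrow> ereal) \<Rightarrow> bool" where
  "convex_efun F \<longleftrightarrow> convex {(x, r::real). F x \<le> ereal r}"

definition conjugate :: "('a::real_inner \<Rightarrow> real) \<Rightarrow> 'a \<Rightarrow> ereal" where
  "conjugate g \<xi> = (SUP x. ereal (inner \<xi> x - g x))"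

definition strongly_convex :: "real \<Rightarrow> ('a::real_inner \<Rightarrow> real) \<Rightarrow> bool" where
  "strongly_convex \<rho> \<psi> \<longleftrightarrow> convex_on UNIV (\<lambda>x. \<psi> x - \<rho> / 2 * (norm x)\<^sup>2)"

definition bregman :: "('a::real_inner \<Rightarrow> real) \<Rightarrow> ('a \<Rightarrow> 'a) \<Rightarrow> 'a \<Rightarrow> 'a \<Rightarrow> real" where
  "bregman \<psi> D\<psi> x y = \<psi> x - \<psi> y - inner (D\<psi> y) (x - y)"

definition frechet_subdiff :: "('a::real_inner \<Rightarrow> ereal) \<Rightarrow> 'a \<Rightarrow> 'a set" where
  "frechet_subdiff F x = {v. \<bar>F x\<bar> \<noteq> \<infinity> \<and>
     (\<forall>\<epsilon>>0. \<exists>d>0. \<forall>y. norm (y - x) < d \<longrightarrow>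
        F y \<ge> F x + ereal (inner v (y - x) - \<epsilon> * norm (y - x)))}"

definition limiting_subdiff :: "('a::real_inner \<Rightarrow> ereal) \<Rightarrow> 'a \<Rightarrow> 'a set" where
  "limiting_subdiff F x = {v. \<bar>F x\<bar> \<noteq> \<infinity> \<and>
     (\<exists>X V. X \<longlonglongrightarrow> x \<and> (\<lambda>k. F (X k)) \<longlonglongrightarrow> F x \<and> V \<longlonglongrightarrow> v \<and>
            (\<forall>k. V k \<in> frechet_subdiff F (X k)))}"

end

theory Submission
  imports Defs
begin


lemma frechet_from_min:
  fixes F P :: "'b::real_inner \<Rightarrow> ereal" and T :: "'b \<Rightarrow> real"
  assumes FP: "\<And>y. F y = P y + ereal (T y)" and Pmin: "\<And>y. P w \<le> P y" and Pfin: "\<bar>P w\<bar> \<noteq> \<infinity>"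
    and TD: "(T has_derivative (\<lambda>h. inner v h)) (at w)"
  shows "v \<in> frechet_subdiff F w"
proof -
  obtain p where p: "P w = ereal p" using Pfin by (cases "P w") auto
  have Fw: "F w = ereal (p + T w)" using FP[of w] p by simp
  have "\<forall>e>0. \<exists>d>0. \<forall>y. norm(y - w) < d \<longrightarrow> norm (T y - T w - inner v (y - w)) \<le> e * norm (y - w)"
    using TD unfolding has_derivative_at_alt by blast
  show ?thesis unfolding frechet_subdiff_def
  proof (intro CollectI conjI allI impI)
    show "\<bar>F w\<bar> \<noteq> \<infinity>" using Fw by simp
    fix e :: real assume e: "e > 0"
    then obtain d where d: "d > 0" and dd: "\<And>y. norm(y - w) < d \<Longrightarrow> norm (T y - T w - inner v (y - w)) \<le> e * norm (y - w)"
      using \<open>\<forall>e>0. _\<close> by blast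
    show "\<exists>d>0. \<forall>y. norm (y - w) < d \<longrightarrow> F w + ereal (inner v (y - w) - e * norm (y - w)) \<le> F y"
    proof (intro exI[of _ d] conjI allI impI d)
      fix y assume "norm (y - w) < d"
      from dd[OF this] have t: "T w + inner v (y - w) - e * norm (y - w) \<le> T y" by auto
      have "F w + ereal (inner v (y - w) - e * norm (y - w)) = ereal p + ereal (T w + inner v (y - w) - e * norm (y - w))"
        using Fw by simp
      also have "\<dots> \<le> P y + ereal (T y)"
        using Pmin[of y] p t by (intro add_mono) auto
      finally show "F w + ereal (inner v (y - w) - e * norm (y - w)) \<le> F y" using FP[of y] by simp
    qed
  qed
qed

lemma frechet_limiting: "v \<in> frechet_subdiff F w \<Longrightarrow> v \<in> limiting_subdiff F w"
  unfolding limiting_subdiff_def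
  apply (rule CollectI, rule conjI)
   apply (simp add: frechet_subdiff_def)
  apply (rule exI[of _ "\<lambda>_. w"], rule exI[of _ "\<lambda>_. v"])
  by auto

lemma conj_gt: "conjugate g \<xi> \<noteq> -\<infinity>"
proof -
  have "ereal (inner \<xi> 0 - g 0) \<le> conjugate g \<xi>" unfolding conjugate_def by (rule SUP_upper) auto
  then show ?thesis by auto
qed

lemma conj_finite_point:
  fixes g :: "'a::euclidean_space \<Rightarrow> real"
  assumes cv: "convex_on UNIV g" and ct: "continuous_on UNIV g"
  shows "\<exists>\<xi>. conjugate g \<xi> < \<infinity>"
proof -
  define E where "E = {p :: 'a \<times> real. g (fst p) \<le> snd p}"
  have "convex E" unfolding E_def convex_def
  proof (clarify)
    fix a t b s :: real and x y :: 'a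
    assume h: "g (fst (x,t)) \<le> snd (x,t)" "g (fst (y,s)) \<le> snd (y,s)" "0 \<le> a" "0 \<le> b" "a + b = 1"
    have "g (a *\<^sub>R x + b *\<^sub>R y) \<le> a * g x + b * g y"
    proof -
      have "a = 1 - b" using h by simp
      moreover have "b \<le> 1" "0 \<le> b" using h by auto
      ultimately show ?thesis using convex_onD[OF cv, of b x y] by simp
    qed
    also have "\<dots> \<le> a * t + b * s" using h by (simp add: add_mono mult_left_mono)
    finally show "g (fst (a *\<^sub>R (x, t) + b *\<^sub>R (y, s))) \<le> snd (a *\<^sub>R (x, t) + b *\<^sub>R (y, s))" by simp
  qed
  moreover have "closed E" unfolding E_def
    by (intro closed_Collect_le continuous_intros continuous_on_compose2[OF ct]) auto
  moreover have "(0, g 0 - 1) \<notin> E" unfolding E_def by simp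
  ultimately obtain a b where ab: "inner a (0, g 0 - 1) < b" "\<forall>p\<in>E. inner a p > b"
    using separating_hyperplane_closed_point by blast
  obtain a1 a2 where a: "a = (a1, a2)" by (cases a)
  have "inner a (0, g 0) > b" using ab(2) unfolding E_def by auto
  with ab(1) a have a2: "a2 > 0" by (simp add: algebra_simps)
  have lo: "inner a1 x + a2 * g x > b" for x using ab(2) a unfolding E_def by auto
  have "conjugate g (- (1/a2) *\<^sub>R a1) \<le> ereal (- b / a2)"
    unfolding conjugate_def
  proof (rule SUP_least)
    fix x
    have "a2 * (inner (- (1/a2) *\<^sub>R a1) x - g x) = - inner a1 x - a2 * g x" using a2 by (simp add: algebra_simps)
    also have "\<dots> < - b" using lo[of x] by simp
    finally have "inner (- (1/a2) *\<^sub>R a1) x - g x \<le> - b / a2" using a2 by (simp add: field_simps)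
    then show "ereal (inner (- (1 / a2) *\<^sub>R a1) x - g x) \<le> ereal (- b / a2)" by simp
  qed
  then have "conjugate g (- (1/a2) *\<^sub>R a1) < \<infinity>" using le_less_trans by fastforce
  then show ?thesis by blast
qed



lemma T_deriv:
  fixes hp hm \<psi> :: "'a::euclidean_space \<Rightarrow> real" and Dhp Dhm D\<psi> :: "'a \<Rightarrow> 'a"
  assumes hp_grad: "\<And>z. (hp has_derivative (\<lambda>v. inner (Dhp z) v)) (at z)"
    and hm_grad: "\<And>z. (hm has_derivative (\<lambda>v. inner (Dhm z) v)) (at z)"
    and psi_grad: "\<And>z. (\<psi> has_derivative (\<lambda>v. inner (D\<psi> z) v)) (at z)"
  shows "((\<lambda>y::'a\<times>'a\<times>'a\<times>'a. - inner (fst (snd y)) (fst y) + hp (fst y) - hm (fst y)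
      + \<delta> * inner (fst y - fst (snd (snd y))) (fst y - fst (snd (snd y)))
      + \<eta> * inner (fst (snd y) - snd (snd (snd y))) (fst (snd y) - snd (snd (snd y)))
      - (hp (fst y) - inner (fst y - xh0) c + \<tau> * (\<psi> (fst y) - \<psi> xh0 - inner (D\<psi> xh0) (fst y - xh0)))
      + inner xh0 (fst (snd y)) - \<beta> / 2 * inner (fst (snd y) - xi0) (fst (snd y) - xi0))
     has_derivative (\<lambda>h. inner (- b - Dhm a + (2*\<delta>) *\<^sub>R (a - a') + c - \<tau> *\<^sub>R (D\<psi> a - D\<psi> xh0),
                              - a + (2*\<eta>) *\<^sub>R (b - b') + xh0 - \<beta> *\<^sub>R (b - xi0),
                              - ((2*\<delta>) *\<^sub>R (a - a')), - ((2*\<eta>) *\<^sub>R (b - b'))) h)) (at (a, b, a', b'))"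
proof -
  have F: "((\<lambda>y. F (fst y)) has_derivative (\<lambda>h. inner (DF (fst w)) (fst h))) (at w)"
    if "\<And>z. (F has_derivative (\<lambda>v. inner (DF z) v)) (at z)" for F :: "'a \<Rightarrow> real" and DF w
    using has_derivative_compose[OF has_derivative_fst[OF has_derivative_ident] that, of w UNIV] by simp
  note hpF = F[OF hp_grad] and hmF = F[OF hm_grad] and psF = F[OF psi_grad]
  show ?thesis
    apply (rule has_derivative_eq_rhs)
     apply (rule derivative_eq_intros hpF hmF psF | simp)+
    apply (rule ext)
    apply (clarsimp simp: inner_Pair algebra_simps inner_diff_left inner_diff_right inner_add_left inner_add_right inner_commute)
    apply (simp add: field_simps)
    done
qed



theorem lemma3p3:
  fixes f :: "'a::euclidean_space \<Rightarrow> ereal"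
    and g hp hm \<psi> :: "'a \<Rightarrow> real"
    and Dhp Dhm D\<psi> :: "'a \<Rightarrow> 'a"
    and Lhp Lhm L\<psi> \<rho> :: real
    and x xi xhat :: "nat \<Rightarrow> 'a"
    and \<alpha> :: "nat \<Rightarrow> real"
    and \<alpha>min \<beta> \<tau> \<delta> \<eta> \<epsilon> :: real
  assumes f_proper: "proper_fun f" and f_lsc: "lsc_fun f" and f_convex: "convex_efun f"
    and g_convex: "convex_on UNIV g" and g_cont: "continuous_on UNIV g"
    and hp_grad: "\<And>z. (hp has_derivative (\<lambda>v. inner (Dhp z) v)) (at z)"
    and hm_grad: "\<And>z. (hm has_derivative (\<lambda>v. inner (Dhm z) v)) (at z)"
    and hp_lip: "Lhp-lipschitz_on UNIV Dhp"
    and hm_lip: "Lhm-lipschitz_on UNIV Dhm"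
    and Phi_bdd: "\<exists>c::real. \<forall>z. f z - ereal (g z) + ereal (hp z - hm z) \<ge> ereal c"
    and psi_grad: "\<And>z. (\<psi> has_derivative (\<lambda>v. inner (D\<psi> z) v)) (at z)"
    and rho_pos: "\<rho> > 0" and psi_sc: "strongly_convex \<rho> \<psi>"
    and psi_lip: "L\<psi>-lipschitz_on UNIV D\<psi>"
    and amin: "0 < \<alpha>min" "\<alpha>min < 1"
    and alpha_range: "\<And>k. \<alpha>min \<le> \<alpha> k \<and> \<alpha> k \<le> 1"
    and beta: "\<beta> > 1/2" and tau_pos: "\<tau> > 0"
    and xhat_def: "\<And>k. xhat k = x k + \<alpha> k *\<^sub>R (x k - x (k - 1))"
    and xi_step: "\<And>k \<zeta>. conjugate g (xi (Suc k)) - ereal (inner (xhat k) (xi (Suc k)))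
                          + ereal (\<beta> / 2 * (norm (xi (Suc k) - xi k))\<^sup>2)
                       \<le> conjugate g \<zeta> - ereal (inner (xhat k) \<zeta>)
                          + ereal (\<beta> / 2 * (norm (\<zeta> - xi k))\<^sup>2)"
    and x_step: "\<And>k z. f (x (Suc k)) + ereal (hp (x (Suc k))
                          - inner (x (Suc k) - xhat k) (xi (Suc k) + Dhm (xhat k))
                          + \<tau> * bregman \<psi> D\<psi> (x (Suc k)) (xhat k))
                       \<le> f z + ereal (hp z - inner (z - xhat k) (xi (Suc k) + Dhm (xhat k))
                          + \<tau> * bregman \<psi> D\<psi> z (xhat k))"
    and eps: "0 < \<epsilon>" "\<epsilon> < 1"
    and delta_def: "\<delta> = (\<tau> * L\<psi> - Lhm) / (2 * ((1 - \<epsilon>) + (1 + \<epsilon>) * \<alpha>min\<^sup>2))"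
    and tau_def: "\<tau> = (2 * Lhm\<^sup>2 + Lhm + 1 + 2 * (1 + \<epsilon>) * \<delta>) / (2 * \<rho>)"
    and eta_def: "\<eta> = (2 * \<beta> - 1) / (2 * (1 + \<epsilon>))"
    and Lhm_lt: "Lhm < \<tau> * L\<psi>"
    and bounded: "bounded (range (\<lambda>k. (x k, xi k, xhat k, xi (k - 1))))"
  shows "let \<Theta> = (\<lambda>(z, \<zeta>). f z + conjugate g \<zeta> + ereal (- inner \<zeta> z + hp z - hm z));
             \<Theta>hat = (\<lambda>(z, \<zeta>, zh, \<zeta>'). \<Theta> (z, \<zeta>)
                       + ereal (\<delta> * (norm (z - zh))\<^sup>2 + \<eta> * (norm (\<zeta> - \<zeta>'))\<^sup>2));
             \<omega> = (\<lambda>k. (x k, xi k, xhat k, xi (k - 1)));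
             \<upsilon> = (\<lambda>k. (Dhm (xhat k) - Dhm (x (Suc k)) + (2 * \<delta>) *\<^sub>R (x (Suc k) - xhat (Suc k))
                          - \<tau> *\<^sub>R (D\<psi> (x (Suc k)) - D\<psi> (xhat k)),
                        xhat k - x k + (1 / \<alpha> (Suc k)) *\<^sub>R (x (Suc k) - xhat (Suc k))
                          + (2 * \<eta> - \<beta>) *\<^sub>R (xi (Suc k) - xi k),
                        - ((2 * \<delta>) *\<^sub>R (x (Suc k) - xhat (Suc k))),
                        (2 * \<eta>) *\<^sub>R (xi k - xi (Suc k))))
         in (\<forall>k. \<upsilon> k \<in> limiting_subdiff \<Theta>hat (\<omega> (Suc k))) \<and>
            (\<exists>\<theta>>0. \<forall>k. infdist 0 (limiting_subdiff \<Theta>hat (\<omega> (Suc k)))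
                 \<le> \<theta> * (norm (x k - xhat k) + norm (x (Suc k) - xhat (Suc k))
                          + norm (xi (Suc k) - xi k)))"
  
proof -
  have apos: "\<And>k. \<alpha> k > 0" using amin alpha_range by (meson less_le_trans)
  obtain z0 where z0: "f z0 < \<infinity>" using f_proper unfolding proper_fun_def by blast
  obtain \<zeta>0 where \<zeta>0: "conjugate g \<zeta>0 < \<infinity>" using conj_finite_point[OF g_convex g_cont] by blast
  have fnm: "\<And>z. f z \<noteq> -\<infinity>" using f_proper unfolding proper_fun_def by blast
  define Th where "Th = (\<lambda>(z, \<zeta>, zh, \<zeta>'). (\<lambda>(z, \<zeta>). f z + conjugate g \<zeta> + ereal (- inner \<zeta> z + hp z - hm z)) (z, \<zeta>)
                       + ereal (\<delta> * (norm (z - zh))\<^sup>2 + \<eta> * (norm (\<zeta> - \<zeta>'))\<^sup>2))"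
  define ups where "ups = (\<lambda>k. (Dhm (xhat k) - Dhm (x (Suc k)) + (2 * \<delta>) *\<^sub>R (x (Suc k) - xhat (Suc k))
                          - \<tau> *\<^sub>R (D\<psi> (x (Suc k)) - D\<psi> (xhat k)),
                        xhat k - x k + (1 / \<alpha> (Suc k)) *\<^sub>R (x (Suc k) - xhat (Suc k))
                          + (2 * \<eta> - \<beta>) *\<^sub>R (xi (Suc k) - xi k),
                        - ((2 * \<delta>) *\<^sub>R (x (Suc k) - xhat (Suc k))),
                        (2 * \<eta>) *\<^sub>R (xi k - xi (Suc k))))"
  have step1: "\<And>k. (1 / \<alpha> (Suc k)) *\<^sub>R (x (Suc k) - xhat (Suc k)) = x k - x (Suc k)"
  proof -
    fix k
    have "x (Suc k) - xhat (Suc k) = - (\<alpha> (Suc k) *\<^sub>R (x (Suc k) - x k))" using xhat_def[of "Suc k"] by simp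
    then have "(1 / \<alpha> (Suc k)) *\<^sub>R (x (Suc k) - xhat (Suc k)) = (1 / \<alpha> (Suc k)) *\<^sub>R (- (\<alpha> (Suc k) *\<^sub>R (x (Suc k) - x k)))"
      by (simp only:)
    also have "\<dots> = - (((1 / \<alpha> (Suc k)) * \<alpha> (Suc k)) *\<^sub>R (x (Suc k) - x k))"
      by (simp only: scaleR_minus_right scaleR_scaleR)
    also have "\<dots> = x k - x (Suc k)" using apos[of "Suc k"] by simp
    finally show "(1 / \<alpha> (Suc k)) *\<^sub>R (x (Suc k) - xhat (Suc k)) = x k - x (Suc k)" .
  qed
  have mem: "ups k \<in> limiting_subdiff Th (x (Suc k), xi (Suc k), xhat (Suc k), xi k)" for k
  proof (rule frechet_limiting)
    define c where "c = xi (Suc k) + Dhm (xhat k)"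
    define xh0 where "xh0 = xhat k"
    define xi0 where "xi0 = xi k"
    define P where "P = (\<lambda>y::'a\<times>'a\<times>'a\<times>'a. (f (fst y) + ereal (hp (fst y)
                          - inner (fst y - xhat k) (xi (Suc k) + Dhm (xhat k))
                          + \<tau> * bregman \<psi> D\<psi> (fst y) (xhat k)))
             + (conjugate g (fst (snd y)) - ereal (inner (xhat k) (fst (snd y)))
                          + ereal (\<beta> / 2 * (norm (fst (snd y) - xi k))\<^sup>2)))"
    define T where "T = (\<lambda>y::'a\<times>'a\<times>'a\<times>'a. - inner (fst (snd y)) (fst y) + hp (fst y) - hm (fst y)
      + \<delta> * inner (fst y - fst (snd (snd y))) (fst y - fst (snd (snd y)))
      + \<eta> * inner (fst (snd y) - snd (snd (snd y))) (fst (snd y) - snd (snd (snd y)))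
      - (hp (fst y) - inner (fst y - xh0) c + \<tau> * (\<psi> (fst y) - \<psi> xh0 - inner (D\<psi> xh0) (fst y - xh0)))
      + inner xh0 (fst (snd y)) - \<beta> / 2 * inner (fst (snd y) - xi0) (fst (snd y) - xi0))"
    show "ups k \<in> frechet_subdiff Th (x (Suc k), xi (Suc k), xhat (Suc k), xi k)"
    proof (rule frechet_from_min[where P=P and T=T])
      fix y :: "'a\<times>'a\<times>'a\<times>'a"
      obtain z \<zeta> zh \<zeta>' where y: "y = (z, \<zeta>, zh, \<zeta>')" by (cases y) auto
      have "f z \<noteq> -\<infinity>" "conjugate g \<zeta> \<noteq> -\<infinity>" using fnm conj_gt by auto
      then show "Th y = P y + ereal (T y)"
        unfolding y Th_def P_def T_def c_def xh0_def xi0_def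
        by (cases "f z"; cases "conjugate g \<zeta>") (auto simp: power2_norm_eq_inner bregman_def algebra_simps)
    next
      fix y :: "'a\<times>'a\<times>'a\<times>'a"
      show "P (x (Suc k), xi (Suc k), xhat (Suc k), xi k) \<le> P y"
        unfolding P_def using x_step[of k "fst y"] xi_step[of k "fst (snd y)"] by (simp add: add_mono)
    next
      have f1: "f (x (Suc k)) < \<infinity>"
      proof (rule ccontr)
        assume "\<not> f (x (Suc k)) < \<infinity>"
        then have "f (x (Suc k)) = \<infinity>" by simp
        then show False using x_step[of k z0] z0 by (cases "f z0") auto
      qed
      have g1: "conjugate g (xi (Suc k)) < \<infinity>"
      proof (rule ccontr)
        assume "\<not> conjugate g (xi (Suc k)) < \<infinity>"
        then have "conjugate g (xi (Suc k)) = \<infinity>" by simp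
        then show False using xi_step[of k \<zeta>0] \<zeta>0 by (cases "conjugate g \<zeta>0") auto
      qed
      have "f (x (Suc k)) \<noteq> -\<infinity>" "conjugate g (xi (Suc k)) \<noteq> -\<infinity>" using fnm conj_gt by auto
      with f1 g1 show "\<bar>P (x (Suc k), xi (Suc k), xhat (Suc k), xi k)\<bar> \<noteq> \<infinity>"
        unfolding P_def
        by (cases "f (x (Suc k))"; cases "conjugate g (xi (Suc k))") auto
    next
      have "(T has_derivative (\<lambda>h. inner (- xi (Suc k) - Dhm (x (Suc k)) + (2*\<delta>) *\<^sub>R (x (Suc k) - xhat (Suc k)) + c - \<tau> *\<^sub>R (D\<psi> (x (Suc k)) - D\<psi> xh0),
                              - x (Suc k) + (2*\<eta>) *\<^sub>R (xi (Suc k) - xi k) + xh0 - \<beta> *\<^sub>R (xi (Suc k) - xi0),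
                              - ((2*\<delta>) *\<^sub>R (x (Suc k) - xhat (Suc k))), - ((2*\<eta>) *\<^sub>R (xi (Suc k) - xi k))) h))
             (at (x (Suc k), xi (Suc k), xhat (Suc k), xi k))"
        unfolding T_def by (rule T_deriv[OF hp_grad hm_grad psi_grad])
      moreover have "(- xi (Suc k) - Dhm (x (Suc k)) + (2*\<delta>) *\<^sub>R (x (Suc k) - xhat (Suc k)) + c - \<tau> *\<^sub>R (D\<psi> (x (Suc k)) - D\<psi> xh0),
                              - x (Suc k) + (2*\<eta>) *\<^sub>R (xi (Suc k) - xi k) + xh0 - \<beta> *\<^sub>R (xi (Suc k) - xi0),
                              - ((2*\<delta>) *\<^sub>R (x (Suc k) - xhat (Suc k))), - ((2*\<eta>) *\<^sub>R (xi (Suc k) - xi k))) = ups k"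
        unfolding ups_def c_def xh0_def xi0_def step1 by (simp add: algebra_simps)
      ultimately show "(T has_derivative (\<lambda>h. inner (ups k) h)) (at (x (Suc k), xi (Suc k), xhat (Suc k), xi k))"
        by simp
    qed
  qed
  have bnd: "\<exists>\<theta>>0. \<forall>k. norm (ups k) \<le> \<theta> * (norm (x k - xhat k) + norm (x (Suc k) - xhat (Suc k))
                          + norm (xi (Suc k) - xi k))"
  proof -
    have Lhm0: "Lhm \<ge> 0" and Lps0: "L\<psi> \<ge> 0" using hm_lip psi_lip unfolding lipschitz_on_def by auto
    define \<theta> where "\<theta> = (Lhm + \<tau> * L\<psi>) * (1 + 1/\<alpha>min) + 4 * \<bar>\<delta>\<bar> + 2 + 1/\<alpha>min + \<bar>2*\<eta> - \<beta>\<bar> + 2 * \<bar>\<eta>\<bar>"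
    have am0: "1/\<alpha>min > 0" using amin by simp
    have tL: "\<tau> * L\<psi> \<ge> 0" using tau_pos Lps0 by simp
    have th0: "\<theta> > 0" unfolding \<theta>_def using Lhm0 tL am0
      by (smt (verit) abs_ge_zero mult_nonneg_nonneg)
    show ?thesis
    proof (intro exI[of _ \<theta>] conjI allI th0)
      fix k
      define A where "A = norm (x k - xhat k)"
      define B where "B = norm (x (Suc k) - xhat (Suc k))"
      define C where "C = norm (xi (Suc k) - xi k)"
      have A0: "A \<ge> 0" "B \<ge> 0" "C \<ge> 0" unfolding A_def B_def C_def by auto
      have d1: "norm (x k - x (Suc k)) \<le> B / \<alpha>min"
      proof -
        have "norm (x k - x (Suc k)) = B / \<alpha> (Suc k)"
          unfolding B_def step1[symmetric] using apos[of "Suc k"] by simp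
        also have "\<dots> \<le> B / \<alpha>min" using A0 alpha_range[of "Suc k"] amin by (intro divide_left_mono) auto
        finally show ?thesis .
      qed
      have d2: "norm (xhat k - x (Suc k)) \<le> A + B / \<alpha>min"
      proof -
        have "norm (xhat k - x (Suc k)) \<le> norm (xhat k - x k) + norm (x k - x (Suc k))"
          using norm_triangle_ineq[of "xhat k - x k" "x k - x (Suc k)"] by simp
        then show ?thesis using d1 unfolding A_def by (simp add: norm_minus_commute)
      qed
      have lh: "norm (Dhm (xhat k) - Dhm (x (Suc k))) \<le> Lhm * (A + B / \<alpha>min)"
      proof -
        have "norm (Dhm (xhat k) - Dhm (x (Suc k))) \<le> Lhm * norm (xhat k - x (Suc k))"
          using hm_lip unfolding lipschitz_on_def dist_norm by auto
        also have "\<dots> \<le> Lhm * (A + B / \<alpha>min)" by (rule mult_left_mono[OF d2 Lhm0])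
        finally show ?thesis .
      qed
      have lp: "norm (\<tau> *\<^sub>R (D\<psi> (x (Suc k)) - D\<psi> (xhat k))) \<le> \<tau> * L\<psi> * (A + B / \<alpha>min)"
      proof -
        have "norm (D\<psi> (x (Suc k)) - D\<psi> (xhat k)) \<le> L\<psi> * norm (x (Suc k) - xhat k)"
          using psi_lip unfolding lipschitz_on_def dist_norm by auto
        also have "\<dots> \<le> L\<psi> * (A + B / \<alpha>min)" using d2 Lps0 by (simp add: mult_left_mono norm_minus_commute)
        finally show ?thesis using tau_pos by (simp add: mult_left_mono)
      qed
      have n1: "norm (fst (ups k)) \<le> (Lhm + \<tau> * L\<psi>) * (A + B / \<alpha>min) + 2 * \<bar>\<delta>\<bar> * B"
      proof -
        have "norm (fst (ups k)) \<le> norm (Dhm (xhat k) - Dhm (x (Suc k))) + norm ((2 * \<delta>) *\<^sub>R (x (Suc k) - xhat (Suc k)))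
             + norm (\<tau> *\<^sub>R (D\<psi> (x (Suc k)) - D\<psi> (xhat k)))"
          unfolding ups_def by (simp add: norm_triangle_le norm_triangle_ineq4 order_trans[OF norm_triangle_ineq4] add_mono norm_triangle_ineq)
        moreover have "norm ((2 * \<delta>) *\<^sub>R (x (Suc k) - xhat (Suc k))) = 2*\<bar>\<delta>\<bar>*B" unfolding B_def by (simp add: abs_mult)
        moreover have "(Lhm + \<tau>*L\<psi>)*(A + B/\<alpha>min) = Lhm*(A+B/\<alpha>min) + \<tau>*L\<psi>*(A+B/\<alpha>min)" by (simp add: distrib_right)
        ultimately show ?thesis using lh lp by linarith
      qed
      have n2: "norm (fst (snd (ups k))) \<le> A + B / \<alpha>min + \<bar>2*\<eta> - \<beta>\<bar> * C"
      proof -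
        have "fst (snd (ups k)) = (xhat k - x k) + (x k - x (Suc k)) + (2 * \<eta> - \<beta>) *\<^sub>R (xi (Suc k) - xi k)"
          unfolding ups_def step1 by simp
        then have "norm (fst (snd (ups k))) \<le> norm (xhat k - x k) + norm (x k - x (Suc k)) + \<bar>2*\<eta> - \<beta>\<bar> * C"
          unfolding C_def by (metis norm_scaleR norm_triangle_le norm_triangle_ineq add_mono order_refl)
        then show ?thesis using d1 unfolding A_def by (simp add: norm_minus_commute)
      qed
      have n3: "norm (fst (snd (snd (ups k)))) = 2 * \<bar>\<delta>\<bar> * B" unfolding ups_def B_def by (simp add: abs_mult)
      have n4: "norm (snd (snd (snd (ups k)))) = 2 * \<bar>\<eta>\<bar> * C" unfolding ups_def C_def by (simp add: norm_minus_commute abs_mult)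
      have "norm (ups k) \<le> norm (fst (ups k)) + (norm (fst (snd (ups k))) + (norm (fst (snd (snd (ups k)))) + norm (snd (snd (snd (ups k))))))"
        by (metis (no_types, lifting) add_left_mono norm_Pair_le order_trans prod.collapse)
      also have "\<dots> \<le> ((Lhm + \<tau> * L\<psi>) + 1) * A + ((Lhm + \<tau> * L\<psi>) / \<alpha>min + 4 * \<bar>\<delta>\<bar> + 1/\<alpha>min) * B
                    + (\<bar>2*\<eta> - \<beta>\<bar> + 2 * \<bar>\<eta>\<bar>) * C"
        using n1 n2 n3 n4 by (simp add: algebra_simps add_divide_distrib)
      also have "\<dots> \<le> \<theta> * A + \<theta> * B + \<theta> * C"
      proof (intro add_mono mult_right_mono A0)
        have P0: "(Lhm + \<tau>*L\<psi>)/\<alpha>min \<ge> 0" using Lhm0 tL amin by simp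
        have P1: "(Lhm + \<tau>*L\<psi>)*(1+1/\<alpha>min) = (Lhm+\<tau>*L\<psi>) + (Lhm+\<tau>*L\<psi>)/\<alpha>min" by (simp add: distrib_left)
        note ab = abs_ge_zero[of \<delta>] abs_ge_zero[of \<eta>] abs_ge_zero[of "2*\<eta>-\<beta>"]
        show "Lhm + \<tau> * L\<psi> + 1 \<le> \<theta>" unfolding \<theta>_def using P0 P1 am0 ab by linarith
        show "(Lhm + \<tau> * L\<psi>) / \<alpha>min + 4 * \<bar>\<delta>\<bar> + 1 / \<alpha>min \<le> \<theta>" unfolding \<theta>_def using P0 P1 am0 ab Lhm0 tL by linarith
        show "\<bar>2 * \<eta> - \<beta>\<bar> + 2 * \<bar>\<eta>\<bar> \<le> \<theta>" unfolding \<theta>_def using P0 P1 am0 ab Lhm0 tL by linarith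
      qed
      finally show "norm (ups k) \<le> \<theta> * (norm (x k - xhat k) + norm (x (Suc k) - xhat (Suc k))
                          + norm (xi (Suc k) - xi k))" unfolding A_def B_def C_def by (simp add: algebra_simps)
    qed
  qed
  have bnd2: "\<exists>\<theta>>0. \<forall>k. infdist 0 (limiting_subdiff Th (x (Suc k), xi (Suc k), xhat (Suc k), xi k))
                 \<le> \<theta> * (norm (x k - xhat k) + norm (x (Suc k) - xhat (Suc k))
                          + norm (xi (Suc k) - xi k))"
  proof -
    obtain \<theta> where th: "\<theta> > 0" "\<forall>k. norm (ups k) \<le> \<theta> * (norm (x k - xhat k) + norm (x (Suc k) - xhat (Suc k))
                          + norm (xi (Suc k) - xi k))" using bnd by blast
    show ?thesis
    proof (intro exI[of _ \<theta>] conjI allI th(1))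
      fix k
      have "infdist 0 (limiting_subdiff Th (x (Suc k), xi (Suc k), xhat (Suc k), xi k)) \<le> dist 0 (ups k)"
        by (rule infdist_le[OF mem])
      then show "infdist 0 (limiting_subdiff Th (x (Suc k), xi (Suc k), xhat (Suc k), xi k))
                 \<le> \<theta> * (norm (x k - xhat k) + norm (x (Suc k) - xhat (Suc k))
                          + norm (xi (Suc k) - xi k))" using th(2)[rule_format, of k] by simp
    qed
  qed
  show ?thesis unfolding Let_def using mem bnd2 unfolding Th_def ups_def by simp
qed

end
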